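(* Let $k\ge1$ and $A\in\mathbb{C}^{k\times k}$ with $\|A-\mathbbm{1}_k\|<1/k$. For $\mathbf{z}=(z_1,\ldots,z_k)^T\in\mathbb{C}^k$ put $\mathbf{w}=(w_1,\ldots,w_k)^T=A\mathbf{z}$. Then $w_1\cdots w_k\neq0$ for all $\mathbf{z}\in(\partial D)^k$, and \[ \frac{1}{\det(A)}=\frac{1}{(2\pi i)^k}\oint_{\partial D}\cdots\oint_{\partial D}\frac{1}{w_1\cdots w_k}\,dz_1\cdots dz_k . \]
   Context: $\|\cdot\|$ is the Frobenius norm, $\mathbbm{1}_k$ the identity matrix, $\partial D=\{z\in\mathbb{C}:|z|=1\}$ is the unit circle traversed once counterclockwise, and the integral is the iterated contour integral in each variable $z_j$ over $\partial D$ (i.e. over the torus $(\partial D)^k$). *)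

theory Defs
  imports "HOL-Complex_Analysis.Complex_Analysis" "Jordan_Normal_Form.Determinant"
begin

definition frob_norm :: "complex mat \<Rightarrow> real" where
  "frob_norm M = sqrt (\<Sum>i<dim_row M. \<Sum>j<dim_col M. (cmod (M $$ (i,j)))\<^sup>2)"

text \<open>Coordinates of w = A z, for z given as a function on indices {0..<k}.\<close>
definition wcoord :: "complex mat \<Rightarrow> (nat \<Rightarrow> complex) \<Rightarrow> nat \<Rightarrow> complex" where
  "wcoord A z i = (\<Sum>j<dim_col A. A $$ (i,j) * z j)"

text \<open>Iterated contour integral over the unit circle in the variables z_0,...,z_(n-1);
  the variable z_0 is the innermost integration, z_(n-1) the outermost.\<close>
fun iter_circ_integral :: "nat \<Rightarrow> ((nat \<Rightarrow> complex) \<Rightarrow> complex) \<Rightarrow> (nat \<Rightarrow> complex) \<Rightarrow> complex" where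
  "iter_circ_integral 0 f z = f z"
| "iter_circ_integral (Suc n) f z =
     contour_integral (circlepath 0 1) (\<lambda>t. iter_circ_integral n f (z(n := t)))"

end

theory Submission
  imports Defs
begin


lemma iter_cong:
  "(\<And>z. (\<forall>j<n. cmod (z j) = 1) \<Longrightarrow> (\<forall>j\<ge>n. z j = z0 j) \<Longrightarrow> f z = g z)
   \<Longrightarrow> iter_circ_integral n f z0 = iter_circ_integral n g z0"
proof (induction n arbitrary: z0)
  case 0
  then show ?case using 0[of z0] by simp
next
  case (Suc n)
  show ?case
    unfolding iter_circ_integral.simps
  proof (rule contour_integral_eq)
    fix t assume t: "t \<in> path_image (circlepath 0 1)"
    hence t1: "cmod t = 1" by (simp add: path_image_circlepath)
    show "iter_circ_integral n f (z0(n := t)) = iter_circ_integral n g (z0(n := t))"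
    proof (rule Suc.IH)
      fix z assume a: "\<forall>j<n. cmod (z j) = 1" "\<forall>j\<ge>n. z j = (z0(n := t)) j"
      show "f z = g z"
      proof (rule Suc.prems)
        show "\<forall>j<Suc n. cmod (z j) = 1" using a t1 by (auto simp: less_Suc_eq)
        show "\<forall>j\<ge>Suc n. z j = z0 j" using a by auto
      qed
    qed
  qed
qed

definition up :: "complex \<Rightarrow> (nat \<Rightarrow> complex) \<Rightarrow> nat \<Rightarrow> complex" where
  "up t z = (\<lambda>j. if j = 0 then t else z (j - 1))"

lemma iter_Suc_inner:
  "iter_circ_integral (Suc n) f z =
   iter_circ_integral n (\<lambda>z'. contour_integral (circlepath 0 1) (\<lambda>t. f (up t z'))) (\<lambda>j. z (Suc j))"
proof (induction n arbitrary: z)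
  case 0
  have "\<And>t. z(0 := t) = up t (\<lambda>j. z (Suc j))"
    by (auto simp: up_def fun_eq_iff)
  then show ?case by simp
next
  case (Suc n)
  have e: "\<And>t. (\<lambda>j. (z(Suc n := t)) (Suc j)) = (\<lambda>j. z (Suc j))(n := t)"
    by (auto simp: fun_eq_iff)
  show ?case
    by (subst iter_circ_integral.simps, subst Suc.IH) (simp only: e iter_circ_integral.simps)
qed



definition schur :: "complex mat \<Rightarrow> nat \<Rightarrow> complex mat" where
  "schur A n = mat n n (\<lambda>(i,j). A$$(Suc i,Suc j) - A$$(Suc i,0)*A$$(0,Suc j)/A$$(0,0))"

lemma det_schur:
  assumes A: "A \<in> carrier_mat (Suc n) (Suc n)" and a: "A$$(0,0) \<noteq> 0"
  shows "det A = A$$(0,0) * det (schur A n)"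
proof -
  define a where "a = A$$(0,0)"
  have a0: "a \<noteq> 0" using a a_def by simp
  define L :: "complex mat" where "L = mat (Suc n) (Suc n) (\<lambda>(i,j). if i = j then 1 else if j = 0 then - A$$(i,0)/a else 0)"
  have Lc: "L \<in> carrier_mat (Suc n) (Suc n)" by (simp add: L_def)
  have dL: "det L = 1"
  proof -
    have "det L = prod_list (diag_mat L)"
      by (rule det_lower_triangular[OF _ Lc]) (auto simp: L_def)
    also have "diag_mat L = map (\<lambda>i. 1) [0..<Suc n]"
      by (auto simp: diag_mat_def L_def)
    also have "prod_list \<dots> = 1" by (induction n) auto
    finally show ?thesis .
  qed
  define B where "B = L * A"
  have Bc: "B \<in> carrier_mat (Suc n) (Suc n)" using Lc A by (simp add: B_def)
  have dB: "det B = det A" unfolding B_def using det_mult[OF Lc A] dL by simp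
  have Bij: "B $$ (i,j) = A$$(i,j) + (if i = 0 then 0 else - A$$(i,0)/a * A$$(0,j))"
    if ij: "i < Suc n" "j < Suc n" for i j
  proof -
    have "B $$ (i,j) = (\<Sum>k\<in>{0..<Suc n}. L$$(i,k) * A$$(k,j))"
      using ij A Lc by (simp add: B_def scalar_prod_def)
    also have "\<dots> = (\<Sum>k\<in>{0..<Suc n}. (if k = i then A$$(i,j) else 0) +
        (if k = 0 \<and> i \<noteq> 0 then - A$$(i,0)/a * A$$(0,j) else 0))"
      by (rule sum.cong) (use ij in \<open>auto simp: L_def\<close>)
    also have "\<dots> = A$$(i,j) + (if i = 0 then 0 else - A$$(i,0)/a * A$$(0,j))"
      using ij by (simp add: sum.distrib)
    finally show ?thesis .
  qed
  have "det B = (\<Sum>i<Suc n. B $$ (i,0) * cofactor B i 0)"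
    by (rule laplace_expansion_column[OF Bc]) simp
  also have "\<dots> = B$$(0,0) * cofactor B 0 0"
    by (subst sum.lessThan_Suc_shift) (simp add: Bij a0 a_def[symmetric])
  also have "B$$(0,0) = a" by (simp add: Bij a_def)
  also have "cofactor B 0 0 = det (mat_delete B 0 0)" by (simp add: cofactor_def)
  also have "mat_delete B 0 0 = schur A n"
    by (rule eq_matI) (use Bc in \<open>auto simp: mat_delete_def schur_def Bij a_def\<close>)
  finally show ?thesis using dB a_def by simp
qed



lemma sum_upper:
  assumes "\<forall>j\<in>J. cmod (z j) \<le> 1"
  shows "cmod (\<Sum>j\<in>J. a j * z j) \<le> (\<Sum>j\<in>J. cmod (a j))"
proof -
  have "cmod (\<Sum>j\<in>J. a j * z j) \<le> (\<Sum>j\<in>J. cmod (a j * z j))" by (rule norm_sum)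
  also have "\<dots> \<le> (\<Sum>j\<in>J. cmod (a j))"
  proof (rule sum_mono)
    fix j assume "j \<in> J"
    then have "cmod (z j) \<le> 1" using assms by auto
    then show "cmod (a j * z j) \<le> cmod (a j)"
      by (simp add: norm_mult mult_left_le)
  qed
  finally show ?thesis .
qed

lemma sum_lower:
  assumes "finite J" "i \<in> J" "cmod (z i) = 1" "\<forall>j\<in>J. cmod (z j) \<le> 1"
  shows "2 * cmod (a i) - (\<Sum>j\<in>J. cmod (a j)) \<le> cmod (\<Sum>j\<in>J. a j * z j)"
proof -
  have s1: "(\<Sum>j\<in>J. a j * z j) = a i * z i + (\<Sum>j\<in>J-{i}. a j * z j)"
    using assms by (simp add: sum.remove)
  have s2: "(\<Sum>j\<in>J. cmod (a j)) = cmod (a i) + (\<Sum>j\<in>J-{i}. cmod (a j))"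
    using assms by (simp add: sum.remove)
  have b: "cmod (\<Sum>j\<in>J-{i}. a j * z j) \<le> (\<Sum>j\<in>J-{i}. cmod (a j))"
    by (rule sum_upper) (use assms in auto)
  have c: "cmod (a i * z i) = cmod (a i)" using assms by (simp add: norm_mult)
  have "cmod (a i * z i) - cmod (\<Sum>j\<in>J-{i}. a j * z j) \<le> cmod (a i * z i + (\<Sum>j\<in>J-{i}. a j * z j))"
    by (metis norm_diff_ineq)
  moreover have "cmod (\<Sum>j\<in>J. a j * z j) = cmod (a i * z i + (\<Sum>j\<in>J-{i}. a j * z j))"
    using s1 by simp
  ultimately show ?thesis using s2 b c by linarith
qed

definition sdd :: "complex mat \<Rightarrow> nat \<Rightarrow> bool" where
  "sdd A n = (\<forall>i<n. (\<Sum>j<n. cmod (A$$(i,j))) < 2 * cmod (A$$(i,i)))"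

lemma wA:
  assumes "A \<in> carrier_mat (Suc n) (Suc n)"
  shows "wcoord A (up t z') i = A$$(i,0)*t + (\<Sum>j<n. A$$(i,Suc j) * z' j)"
proof -
  have "dim_col A = Suc n" using assms by simp
  then show ?thesis unfolding wcoord_def \<open>dim_col A = Suc n\<close> by (subst sum.lessThan_Suc_shift) (simp add: up_def)
qed

lemma sdd_schur:
  assumes A: "A \<in> carrier_mat (Suc n) (Suc n)" and s: "sdd A (Suc n)"
  shows "sdd (schur A n) n"
  unfolding sdd_def
proof (intro allI impI)
  fix i assume i: "i < n"
  define a where "a = A$$(0,0)"
  define al where "al = cmod a"
  define u where "u = cmod (A$$(Suc i,0))"
  define T0 where "T0 = (\<Sum>j<n. cmod (A$$(0,Suc j)))"
  define X where "X = (\<Sum>j\<in>{..<n}-{i}. cmod (A$$(Suc i,Suc j)))"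
  define Y where "Y = (\<Sum>j\<in>{..<n}-{i}. cmod (A$$(0,Suc j)))"
  define S where "S = schur A n"
  have r0: "(\<Sum>j<Suc n. cmod (A$$(0,j))) < 2 * cmod (A$$(0,0))" using s by (auto simp: sdd_def)
  moreover have "(\<Sum>j<Suc n. cmod (A$$(0,j))) = cmod (A$$(0,0)) + T0"
    unfolding T0_def by (rule sum.lessThan_Suc_shift)
  ultimately have T0a: "T0 < al" by (simp add: al_def a_def)
  have T0pos: "0 \<le> T0" unfolding T0_def by (rule sum_nonneg) auto
  have alpos: "al > 0" using T0a T0pos by linarith
  have T0Y: "T0 = cmod (A$$(0,Suc i)) + Y"
    unfolding T0_def Y_def using i by (simp add: sum.remove)
  have ri: "(\<Sum>j<Suc n. cmod (A$$(Suc i,j))) < 2 * cmod (A$$(Suc i,Suc i))" using s i by (auto simp: sdd_def)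
  have "(\<Sum>j<Suc n. cmod (A$$(Suc i,j))) = u + (\<Sum>j<n. cmod (A$$(Suc i,Suc j)))"
    unfolding u_def by (rule sum.lessThan_Suc_shift)
  also have "(\<Sum>j<n. cmod (A$$(Suc i,Suc j))) = cmod (A$$(Suc i,Suc i)) + X"
    unfolding X_def using i by (simp add: sum.remove)
  finally have riX: "u + X < cmod (A$$(Suc i,Suc i))" using ri by linarith
  have uT: "u * T0 / al \<le> u"
  proof -
    have "u * T0 \<le> u * al" using T0a u_def by (intro mult_left_mono) auto
    thus ?thesis using alpos by (simp add: divide_le_eq)
  qed
  have Sij: "S$$(i,j) = A$$(Suc i,Suc j) - A$$(Suc i,0)/a * A$$(0,Suc j)" if "j < n" for j
    using that i by (simp add: S_def schur_def a_def)
  have ub: "cmod (S$$(i,j)) \<le> cmod (A$$(Suc i,Suc j)) + u/al * cmod (A$$(0,Suc j))" if "j < n" for j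
    using Sij[OF that] norm_triangle_ineq4[of "A$$(Suc i,Suc j)" "A$$(Suc i,0)/a * A$$(0,Suc j)"]
    by (simp add: norm_mult norm_divide u_def al_def)
  have lb: "cmod (A$$(Suc i,Suc i)) - u/al * cmod (A$$(0,Suc i)) \<le> cmod (S$$(i,i))"
    using Sij[OF i] norm_triangle_ineq2[of "A$$(Suc i,Suc i)" "A$$(Suc i,0)/a * A$$(0,Suc i)"]
    by (simp add: norm_mult norm_divide u_def al_def)
  have "(\<Sum>j\<in>{..<n}-{i}. cmod (S$$(i,j))) \<le> (\<Sum>j\<in>{..<n}-{i}. cmod (A$$(Suc i,Suc j)) + u/al * cmod (A$$(0,Suc j)))"
    by (rule sum_mono) (use ub in auto)
  also have "\<dots> = X + u/al * Y" by (simp add: X_def Y_def sum.distrib sum_distrib_left)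
  finally have sb: "(\<Sum>j\<in>{..<n}-{i}. cmod (S$$(i,j))) \<le> X + u/al * Y" .
  have "u/al * Y + u/al * cmod (A$$(0,Suc i)) = u * T0 / al" using T0Y by (simp add: add_divide_distrib algebra_simps)
  then have "(\<Sum>j\<in>{..<n}-{i}. cmod (S$$(i,j))) < cmod (S$$(i,i))"
    using sb lb riX uT by linarith
  moreover have "(\<Sum>j<n. cmod (S$$(i,j))) = cmod (S$$(i,i)) + (\<Sum>j\<in>{..<n}-{i}. cmod (S$$(i,j)))"
    using i by (simp add: sum.remove)
  ultimately show "(\<Sum>j<n. cmod (schur A n $$ (i, j))) < 2 * cmod (schur A n $$ (i, i))"
    unfolding S_def by linarith
qed



lemma wcoord_sum:
  assumes "A \<in> carrier_mat n n"
  shows "wcoord A z i = (\<Sum>j<n. A$$(i,j) * z j)"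
  using assms by (simp add: wcoord_def)

lemma wcoord_nz:
  assumes A: "A \<in> carrier_mat n n" and s: "sdd A n" and i: "i < n"
    and zi: "cmod (z i) = 1" and z: "\<forall>j<n. cmod (z j) \<le> 1"
  shows "wcoord A z i \<noteq> 0"
proof -
  have "2 * cmod (A$$(i,i)) - (\<Sum>j\<in>{..<n}. cmod (A$$(i,j))) \<le> cmod (\<Sum>j\<in>{..<n}. A$$(i,j) * z j)"
    by (rule sum_lower) (use i zi z in auto)
  moreover have "(\<Sum>j<n. cmod (A$$(i,j))) < 2 * cmod (A$$(i,i))" using s i by (auto simp: sdd_def)
  ultimately show ?thesis using wcoord_sum[OF A] by auto
qed

lemma inner_integral:
  assumes A: "A \<in> carrier_mat (Suc n) (Suc n)" and s: "sdd A (Suc n)"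
    and z': "\<forall>j<n. cmod (z' j) = 1"
  shows "contour_integral (circlepath 0 1) (\<lambda>t. c / (\<Prod>i<Suc n. wcoord A (up t z') i))
       = (c * (2 * of_real pi * \<i>) / A$$(0,0)) / (\<Prod>i<n. wcoord (schur A n) z' i)"
proof -
  define a where "a = A$$(0,0)"
  define cc0 where "cc0 = (\<Sum>j<n. A$$(0,Suc j) * z' j)"
  define T0 where "T0 = (\<Sum>j<n. cmod (A$$(0,Suc j)))"
  define d where "d = (\<lambda>i. \<Sum>j<n. A$$(Suc i,Suc j) * z' j)"
  define p where "p = - cc0 / a"
  define P where "P = (\<lambda>t. \<Prod>i<n. A$$(Suc i,0)*t + d i)"
  define g where "g = (\<lambda>t. c / (a * P t))"
  have r0: "(\<Sum>j<Suc n. cmod (A$$(0,j))) < 2 * cmod (A$$(0,0))" using s by (auto simp: sdd_def)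
  moreover have "(\<Sum>j<Suc n. cmod (A$$(0,j))) = cmod (A$$(0,0)) + T0"
    unfolding T0_def by (rule sum.lessThan_Suc_shift)
  ultimately have T0a: "T0 < cmod a" by (simp add: a_def)
  have T0pos: "0 \<le> T0" unfolding T0_def by (rule sum_nonneg) auto
  have a0: "a \<noteq> 0" using T0a T0pos by auto
  have "cmod cc0 \<le> T0" unfolding cc0_def T0_def by (rule sum_upper) (use z' in auto)
  hence p1: "cmod p < 1" using T0a a0 by (simp add: p_def norm_divide divide_less_eq)
  have wAi: "wcoord A (up t z') (Suc i) = A$$(Suc i,0)*t + d i" for t i
    using wA[OF A] by (simp add: d_def)
  have wA0: "wcoord A (up t z') 0 = a * (t - p)" for t
    using wA[OF A] a0 by (simp add: a_def cc0_def p_def algebra_simps)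
  have Pnz: "P t \<noteq> 0" if t: "t \<in> cball 0 1" for t
  proof -
    have "wcoord A (up t z') (Suc i) \<noteq> 0" if i: "i < n" for i
    proof (rule wcoord_nz[OF A s])
      show "Suc i < Suc n" using i by simp
      show "cmod (up t z' (Suc i)) = 1" using z' i by (simp add: up_def)
      show "\<forall>j<Suc n. cmod (up t z' j) \<le> 1"
        using z' t by (auto simp: up_def)
    qed
    then show ?thesis unfolding P_def by (simp add: wAi)
  qed
  have hol: "g holomorphic_on cball 0 1"
    unfolding g_def P_def using Pnz a0 unfolding P_def
    by (intro holomorphic_intros) auto
  have ci: "((\<lambda>u. g u / (u - p)) has_contour_integral (2 * of_real pi * \<i> * g p)) (circlepath 0 1)"
    by (rule Cauchy_integral_circlepath_simple[OF hol]) (use p1 in simp)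
  have feq: "(\<lambda>t. c / (\<Prod>i<Suc n. wcoord A (up t z') i)) = (\<lambda>u. g u / (u - p))"
  proof
    fix u
    have "(\<Prod>i<Suc n. wcoord A (up u z') i) = a * (u - p) * P u"
      by (subst prod.lessThan_Suc_shift) (simp add: wA0 wAi P_def)
    then show "c / (\<Prod>i<Suc n. wcoord A (up u z') i) = g u / (u - p)"
      by (simp add: g_def mult_ac)
  qed
  have Sc: "schur A n \<in> carrier_mat n n" by (simp add: schur_def)
  have Pp: "P p = (\<Prod>i<n. wcoord (schur A n) z' i)"
    unfolding P_def
  proof (rule prod.cong[OF refl])
    fix i assume i: "i \<in> {..<n}"
    have "wcoord (schur A n) z' i = (\<Sum>j<n. (schur A n)$$(i,j) * z' j)" by (rule wcoord_sum[OF Sc])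
    also have "\<dots> = (\<Sum>j<n. A$$(Suc i,Suc j) * z' j - (A$$(Suc i,0)/a) * (A$$(0,Suc j) * z' j))"
      by (rule sum.cong) (use i in \<open>auto simp: schur_def a_def algebra_simps\<close>)
    also have "\<dots> = d i - (A$$(Suc i,0)/a) * cc0"
      by (simp add: sum_subtractf sum_distrib_left d_def cc0_def)
    also have "\<dots> = A$$(Suc i,0)*p + d i" by (simp add: p_def algebra_simps)
    finally show "A$$(Suc i,0)*p + d i = wcoord (schur A n) z' i" by simp
  qed
  have "contour_integral (circlepath 0 1) (\<lambda>t. c / (\<Prod>i<Suc n. wcoord A (up t z') i))
      = 2 * of_real pi * \<i> * g p"
    unfolding feq by (rule contour_integral_unique[OF ci])
  also have "\<dots> = (c * (2 * of_real pi * \<i>) / A$$(0,0)) / (\<Prod>i<n. wcoord (schur A n) z' i)"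
    by (simp add: g_def Pp a_def)
  finally show ?thesis .
qed

lemma main:
  assumes "A \<in> carrier_mat n n" "sdd A n"
  shows "iter_circ_integral n (\<lambda>z. c / (\<Prod>i<n. wcoord A z i)) z0 = c * (2 * of_real pi * \<i>) ^ n / det A"
  using assms
proof (induction n arbitrary: A c z0)
  case 0
  have "A = 1\<^sub>m 0" by (rule eq_matI) (use 0 in auto)
  then show ?case by simp
next
  case (Suc n)
  note A = Suc.prems(1) and s = Suc.prems(2)
  define a where "a = A$$(0,0)"
  have r0: "(\<Sum>j<Suc n. cmod (A$$(0,j))) < 2 * cmod (A$$(0,0))" using s by (auto simp: sdd_def)
  moreover have "(\<Sum>j<Suc n. cmod (A$$(0,j))) = cmod (A$$(0,0)) + (\<Sum>j<n. cmod (A$$(0,Suc j)))"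
    by (rule sum.lessThan_Suc_shift)
  moreover have "0 \<le> (\<Sum>j<n. cmod (A$$(0,Suc j)))" by (rule sum_nonneg) auto
  ultimately have a0: "a \<noteq> 0" by (auto simp: a_def)
  have Sc: "schur A n \<in> carrier_mat n n" by (simp add: schur_def)
  have sS: "sdd (schur A n) n" by (rule sdd_schur[OF A s])
  have dA: "det A = a * det (schur A n)" using det_schur[OF A] a0 by (simp add: a_def)
  have "iter_circ_integral (Suc n) (\<lambda>z. c / (\<Prod>i<Suc n. wcoord A z i)) z0
     = iter_circ_integral n (\<lambda>z'. contour_integral (circlepath 0 1) (\<lambda>t. c / (\<Prod>i<Suc n. wcoord A (up t z') i))) (\<lambda>j. z0 (Suc j))"
    by (rule iter_Suc_inner)
  also have "\<dots> = iter_circ_integral n (\<lambda>z'. (c * (2 * of_real pi * \<i>) / a) / (\<Prod>i<n. wcoord (schur A n) z' i)) (\<lambda>j. z0 (Suc j))"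
    by (rule iter_cong) (use inner_integral[OF A s] in \<open>simp add: a_def\<close>)
  also have "\<dots> = (c * (2 * of_real pi * \<i>) / a) * (2 * of_real pi * \<i>) ^ n / det (schur A n)"
    by (rule Suc.IH[OF Sc sS])
  also have "\<dots> = c * (2 * of_real pi * \<i>) ^ Suc n / det A"
    using a0 by (simp add: dA field_simps)
  finally show ?case .
qed



lemma frob_sdd:
  assumes k: "k \<ge> 1" and A: "A \<in> carrier_mat k k"
    and f: "frob_norm (A - 1\<^sub>m k) < 1 / real k"
  shows "sdd A k"
  unfolding sdd_def
proof (intro allI impI)
  fix i assume i: "i < k"
  define B where "B = A - 1\<^sub>m k"
  have Bc: "B \<in> carrier_mat k k" unfolding B_def using A by (intro minus_carrier_mat) auto
  have Bij: "B$$(i',j) = A$$(i',j) - (if i' = j then 1 else 0)" if "i' < k" "j < k" for i' j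
    using that A by (simp add: B_def)
  have bnd: "cmod (B$$(i,j)) < 1 / real k" if j: "j < k" for j
  proof -
    have "(cmod (B$$(i,j)))\<^sup>2 \<le> (\<Sum>j'<k. (cmod (B$$(i,j')))\<^sup>2)"
      by (rule member_le_sum) (use j in auto)
    also have "\<dots> \<le> (\<Sum>i'<k. \<Sum>j'<k. (cmod (B$$(i',j')))\<^sup>2)"
      by (rule member_le_sum[where f = "\<lambda>i'. \<Sum>j'<k. (cmod (B$$(i',j')))\<^sup>2"])
         (use i in \<open>auto intro: sum_nonneg\<close>)
    finally have "cmod (B$$(i,j)) \<le> frob_norm B"
      using Bc by (simp add: frob_norm_def real_le_rsqrt)
    thus ?thesis using f B_def by simp
  qed
  have "(\<Sum>j<k. cmod (B$$(i,j))) < (\<Sum>j<k. 1 / real k)"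
    by (rule sum_strict_mono) (use k bnd i in auto)
  also have "\<dots> = 1" using k by simp
  finally have sB: "(\<Sum>j<k. cmod (B$$(i,j))) < 1" .
  have ik: "i \<in> {..<k}" using i by simp
  have e1: "(\<Sum>j<k. cmod (A$$(i,j))) = cmod (A$$(i,i)) + (\<Sum>j\<in>{..<k}-{i}. cmod (A$$(i,j)))"
    using ik by (simp add: sum.remove)
  have e2: "(\<Sum>j<k. cmod (B$$(i,j))) = cmod (B$$(i,i)) + (\<Sum>j\<in>{..<k}-{i}. cmod (B$$(i,j)))"
    using ik by (simp add: sum.remove)
  have e3: "(\<Sum>j\<in>{..<k}-{i}. cmod (A$$(i,j))) = (\<Sum>j\<in>{..<k}-{i}. cmod (B$$(i,j)))"
    by (rule sum.cong) (use i Bij in auto)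
  have "A$$(i,i) = B$$(i,i) + 1" using Bij[OF i i] by simp
  hence "1 \<le> cmod (A$$(i,i)) + cmod (B$$(i,i))"
    by (metis add.commute add_diff_cancel_left' norm_one norm_triangle_ineq4 diff_le_eq)
  then show "(\<Sum>j<k. cmod (A$$(i,j))) < 2 * cmod (A$$(i,i))"
    using e1 e2 e3 sB by linarith
qed

theorem theorem2:
  fixes k :: nat and A :: "complex mat"
  assumes "k \<ge> 1"
    and "A \<in> carrier_mat k k"
    and "frob_norm (A - 1\<^sub>m k) < 1 / real k"
  shows "(\<forall>z. (\<forall>j<k. cmod (z j) = 1) \<longrightarrow> (\<Prod>i<k. wcoord A z i) \<noteq> 0) \<and>
         1 / det A = 1 / (2 * of_real pi * \<i>) ^ k *
           iter_circ_integral k (\<lambda>z. 1 / (\<Prod>i<k. wcoord A z i)) (\<lambda>_. 0)"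
proof
  have s: "sdd A k" by (rule frob_sdd[OF assms])
  show "\<forall>z. (\<forall>j<k. cmod (z j) = 1) \<longrightarrow> (\<Prod>i<k. wcoord A z i) \<noteq> 0"
  proof (intro allI impI)
    fix z :: "nat \<Rightarrow> complex" assume z: "\<forall>j<k. cmod (z j) = 1"
    have "wcoord A z i \<noteq> 0" if "i < k" for i
      by (rule wcoord_nz[OF assms(2) s that]) (use z that in auto)
    then show "(\<Prod>i<k. wcoord A z i) \<noteq> 0" by simp
  qed
  have m: "iter_circ_integral k (\<lambda>z. 1 / (\<Prod>i<k. wcoord A z i)) (\<lambda>_. 0) = 1 * (2 * of_real pi * \<i>) ^ k / det A"
    by (rule main[OF assms(2) s])
  have nz: "(2 * of_real pi * \<i> :: complex) ^ k \<noteq> 0" by simp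
  show "1 / det A = 1 / (2 * of_real pi * \<i>) ^ k *
           iter_circ_integral k (\<lambda>z. 1 / (\<Prod>i<k. wcoord A z i)) (\<lambda>_. 0)"
    unfolding m using nz by simp
qed

end
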